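(* Let $\mathcal{B}^0\subset\mathbb{R}^6$ be the set of all $(a,b,c,d,e,f)\neq 0$ such that the Type $\mathcal{B}$ model $\mathcal{N}(a,b,c,d,e,f)$ is flat. Define $\mathcal{U}_1(r,s):=(1+rs^2,\,-s(1+rs^2),\,rs,\,-rs^2,\,r,\,-rs)$, $\mathcal{U}_2(u,v):=(u,v,0,0,0,0)$, $\mathcal{U}_3(u,v):=(u,v,0,1+u,0,0)$, and let $\mathcal{B}_i$ be the range of $\mathcal{U}_i$ (over all real parameters). Then $\mathcal{B}^0=(\mathcal{B}_1\cup\mathcal{B}_2\cup\mathcal{B}_3)\setminus\{0\}$. Moreover $\mathcal{B}_2$ and $\mathcal{B}_3$ are closed smooth surfaces in $\mathbb{R}^6$ diffeomorphic to $\mathbb{R}^2$ which intersect transversally along the curve $\{(-1,v,0,0,0,0):v\in\mathbb{R}\}$; and $\mathcal{B}_1$ can be completed to a smooth closed surface $\tilde{\mathcal{B}}_1$ which intersects $\mathcal{B}_2$ transversally along the curve $\{(1,v,0,0,0,0):v\in\mathbb{R}\}$ and intersects $\mathcal{B}_3$ transversally along the curve $\{(0,v,0,1,0,0):v\in\mathbb{R}\}$.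
   Context: For $(a,b,c,d,e,f)\in\mathbb{R}^6$, the Type $\mathcal{B}$ model $\mathcal{N}(a,b,c,d,e,f)$ is $(\mathbb{R}^+\times\mathbb{R},\nabla)$ where $\nabla$ is the torsion free connection with Christoffel symbols ($\nabla_{\partial_{x^i}}\partial_{x^j}=\Gamma_{ij}{}^k\partial_{x^k}$) $\Gamma_{11}{}^1=a/x^1$, $\Gamma_{11}{}^2=b/x^1$, $\Gamma_{12}{}^1=\Gamma_{21}{}^1=c/x^1$, $\Gamma_{12}{}^2=\Gamma_{21}{}^2=d/x^1$, $\Gamma_{22}{}^1=e/x^1$, $\Gamma_{22}{}^2=f/x^1$; this identifies Type $\mathcal{B}$ geometries with $\mathbb{R}^6$. Its Ricci tensor is $\rho=(x^1)^{-2}\begin{pmatrix}(a-d+1)d+b(f-c) & cd-be+f\\ c(d-1)-be & -c^2+fc+(a-d-1)e\end{pmatrix}$, and the model is flat iff $\rho=0$. *)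

theory Defs
  imports "HOL-Analysis.Analysis"
begin

text \<open>Points of R^6 are identified with Type B geometries N(a,b,c,d,e,f).\<close>

definition pt6 :: "real \<Rightarrow> real \<Rightarrow> real \<Rightarrow> real \<Rightarrow> real \<Rightarrow> real \<Rightarrow> real^6" where
  "pt6 a b c d e f = vector [a, b, c, d, e, f]"

text \<open>Entries of (x^1)^2 times the Ricci tensor of the Type B model N(a,b,c,d,e,f).\<close>
definition typeB_ricci :: "real^6 \<Rightarrow> real^2^2" where
  "typeB_ricci p = (let a = p$1; b = p$2; c = p$3; d = p$4; e = p$5; f = p$6 in
     (\<chi> i j. if i = 1 \<and> j = 1 then (a - d + 1) * d + b * (f - c)
            else if i = 1 \<and> j = 2 then c * d - b * e + f
            else if i = 2 \<and> j = 1 then c * (d - 1) - b * e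
            else - (c^2) + f * c + (a - d - 1) * e))"

text \<open>The model is flat iff its Ricci tensor vanishes (the factor (x^1)^-2 is nonzero).\<close>
definition typeB_flat :: "real^6 \<Rightarrow> bool" where
  "typeB_flat p \<longleftrightarrow> typeB_ricci p = 0"

definition B0 :: "(real^6) set" where
  "B0 = {p. p \<noteq> 0 \<and> typeB_flat p}"

definition U1 :: "real \<Rightarrow> real \<Rightarrow> real^6" where
  "U1 r s = pt6 (1 + r * s^2) (- s * (1 + r * s^2)) (r * s) (- r * s^2) r (- r * s)"

definition U2 :: "real \<Rightarrow> real \<Rightarrow> real^6" where
  "U2 u v = pt6 u v 0 0 0 0"

definition U3 :: "real \<Rightarrow> real \<Rightarrow> real^6" where
  "U3 u v = pt6 u v 0 (1 + u) 0 0"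

definition B1 :: "(real^6) set" where "B1 = range (\<lambda>(r, s). U1 r s)"
definition B2 :: "(real^6) set" where "B2 = range (\<lambda>(u, v). U2 u v)"
definition B3 :: "(real^6) set" where "B3 = range (\<lambda>(u, v). U3 u v)"

definition smooth_on :: "'a::euclidean_space set \<Rightarrow> ('a \<Rightarrow> 'b::real_normed_vector) \<Rightarrow> bool" where
  "smooth_on U f \<longleftrightarrow> (\<exists>D :: 'a list \<Rightarrow> 'a \<Rightarrow> 'b. D [] = f \<and>
      (\<forall>xs. continuous_on U (D xs)) \<and>
      (\<forall>xs. \<forall>v\<in>Basis. \<forall>x\<in>U.
          ((\<lambda>t. D xs (x + t *\<^sub>R v)) has_vector_derivative D (v # xs) x) (at 0)))"

definition immersion_on :: "'a::euclidean_space set \<Rightarrow> ('a \<Rightarrow> 'b::real_normed_vector) \<Rightarrow> bool" where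
  "immersion_on U \<phi> \<longleftrightarrow> (\<forall>x\<in>U. \<exists>L. (\<phi> has_derivative L) (at x) \<and> inj L)"

definition smooth_surface :: "(real^6) set \<Rightarrow> bool" where
  "smooth_surface S \<longleftrightarrow> (\<forall>p\<in>S. \<exists>U (V :: (real^2) set) \<phi>.
      open U \<and> p \<in> U \<and> open V \<and> smooth_on V \<phi> \<and> immersion_on V \<phi> \<and>
      inj_on \<phi> V \<and> \<phi> ` V = S \<inter> U \<and> continuous_on (S \<inter> U) (inv_into V \<phi>))"

definition diffeomorphic_to_plane :: "(real^6) set \<Rightarrow> bool" where
  "diffeomorphic_to_plane S \<longleftrightarrow> (\<exists>\<phi> :: real^2 \<Rightarrow> real^6.
      smooth_on UNIV \<phi> \<and> immersion_on UNIV \<phi> \<and> inj \<phi> \<and> range \<phi> = S \<and>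
      continuous_on S (inv \<phi>))"

definition tangent_space :: "(real^6) set \<Rightarrow> real^6 \<Rightarrow> (real^6) set" where
  "tangent_space S p = {w. \<exists>\<gamma> :: real \<Rightarrow> real^6. (\<forall>t. \<gamma> t \<in> S) \<and> \<gamma> 0 = p \<and>
      (\<gamma> has_vector_derivative w) (at 0)}"

text \<open>Two surfaces in R^6 intersect transversally along C: their intersection is exactly C
  and at each point of C their tangent planes are distinct (so meet in a line).\<close>
definition intersect_transversally_along :: "(real^6) set \<Rightarrow> (real^6) set \<Rightarrow> (real^6) set \<Rightarrow> bool" where
  "intersect_transversally_along S T C \<longleftrightarrow>
     S \<inter> T = C \<and> (\<forall>p\<in>C. tangent_space S p \<noteq> tangent_space T p)"

end

theory Submission
  imports Defs
begin

lemma exhaust_6: fixes x :: 6 shows "x = 1 \<or> x = 2 \<or> x = 3 \<or> x = 4 \<or> x = 5 \<or> x = 6"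
proof (induct x)
  case (of_int z)
  then have "z = 0 \<or> z = 1 \<or> z = 2 \<or> z = 3 \<or> z = 4 \<or> z = 5" by fastforce
  then show ?case by auto
qed

lemma forall_6: "(\<forall>i::6. P i) \<longleftrightarrow> P 1 \<and> P 2 \<and> P 3 \<and> P 4 \<and> P 5 \<and> P 6"
  by (metis exhaust_6)

lemma pt6_nth [simp]:
  "pt6 a b c d e f $ 1 = a" "pt6 a b c d e f $ 2 = b" "pt6 a b c d e f $ 3 = c"
  "pt6 a b c d e f $ 4 = d" "pt6 a b c d e f $ 5 = e" "pt6 a b c d e f $ 6 = f"
  unfolding pt6_def vector_def by simp_all

lemma pt6_eq: "pt6 a b c d e f = pt6 a' b' c' d' e' f' \<longleftrightarrow> a = a' \<and> b = b' \<and> c = c' \<and> d = d' \<and> e = e' \<and> f = f'"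
  by (metis pt6_nth)

lemma pt6_all: "p = pt6 (p$1) (p$2) (p$3) (p$4) (p$5) (p$6)"
  by (simp add: vec_eq_iff forall_6)

lemma pt6_zero: "pt6 a b c d e f = 0 \<longleftrightarrow> a = 0 \<and> b = 0 \<and> c = 0 \<and> d = 0 \<and> e = 0 \<and> f = 0"
  by (simp add: vec_eq_iff forall_6)

lemma pt6_add: "pt6 a b c d e f + pt6 a' b' c' d' e' f' = pt6 (a+a') (b+b') (c+c') (d+d') (e+e') (f+f')"
  by (simp add: vec_eq_iff forall_6)

lemma pt6_scale: "k *\<^sub>R pt6 a b c d e f = pt6 (k*a) (k*b) (k*c) (k*d) (k*e) (k*f)"
  by (simp add: vec_eq_iff forall_6)

lemma flat_iff: "typeB_flat p \<longleftrightarrow>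
   (p$1 - p$4 + 1) * p$4 + p$2 * (p$6 - p$3) = 0 \<and> p$3 * p$4 - p$2 * p$5 + p$6 = 0 \<and>
   p$3 * (p$4 - 1) - p$2 * p$5 = 0 \<and> - ((p$3)^2) + p$6 * p$3 + (p$1 - p$4 - 1) * p$5 = 0"
  unfolding typeB_flat_def typeB_ricci_def Let_def
  by (simp add: vec_eq_iff forall_2)

lemma flat_pt6: "typeB_flat (pt6 a b c d e f) \<longleftrightarrow>
   (a - d + 1) * d + b * (f - c) = 0 \<and> c * d - b * e + f = 0 \<and>
   c * (d - 1) - b * e = 0 \<and> - (c^2) + f * c + (a - d - 1) * e = 0"
  by (simp add: flat_iff)

lemma flat_classify:
  assumes "(a - d + 1) * d + b * (f - c) = 0" "c * d - b * e + f = 0"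
   "c * (d - 1) - b * e = 0" "- (c^2) + f * c + (a - d - 1) * e = (0::real)"
  shows "pt6 a b c d e f \<in> B1 \<union> B2 \<union> B3"
proof -
  have f: "f = - c" using assms(2,3) by algebra
  show ?thesis
  proof (cases "e = 0")
    case True
    then have "c = 0" using assms(4) f by (simp add: power2_eq_square)
    then have "(a - d + 1) * d = 0" using assms(1) f by simp
    then have "d = 0 \<or> d = 1 + a" by auto
    then show ?thesis
    proof
      assume "d = 0" then have "pt6 a b c d e f = U2 a b" using True \<open>c = 0\<close> f by (simp add: U2_def)
      then show ?thesis unfolding B2_def by auto
    next
      assume "d = 1 + a" then have "pt6 a b c d e f = U3 a b" using True \<open>c = 0\<close> f by (simp add: U3_def)
      then show ?thesis unfolding B3_def by auto
    qed
  next
    case False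
    define s where "s = c / e"
    have c: "c = e * s" using False by (simp add: s_def)
    have h4: "(a - d - 1) * e = 2 * e * e * s^2" using assms(4) f c by (simp add: power2_eq_square algebra_simps)
    then have "(a - d - 1 - 2 * e * s^2) * e = 0" by (simp add: algebra_simps power2_eq_square)
    then have a: "a - d - 1 = 2 * e * s^2" using False by simp
    have "e * (s * (d - 1) - b) = 0" using assms(3) c by (simp add: algebra_simps)
    then have b: "b = s * (d - 1)" using False by simp
    have "(a - d + 1) * d - 2 * b * e * s = 0" using assms(1) f c by (simp add: algebra_simps)
    moreover have a2: "a - d + 1 = 2 * e * s^2 + 2" using a by simp
    ultimately have "(2 * e * s^2 + 2) * d - 2 * (s * (d - 1)) * e * s = 0" unfolding b by simp
    then have d: "d = - e * s^2" by (simp add: algebra_simps power2_eq_square)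
    have "pt6 a b c d e f = U1 e s"
      unfolding U1_def pt6_eq using a b c d f by (simp add: algebra_simps power2_eq_square)
    then show ?thesis unfolding B1_def by auto
  qed
qed

lemma part1: "B0 = (B1 \<union> B2 \<union> B3) - {0}"
proof
  show "B0 \<subseteq> (B1 \<union> B2 \<union> B3) - {0}"
  proof
    fix p assume "p \<in> B0"
    then have "p \<noteq> 0" "typeB_flat p" unfolding B0_def by auto
    then show "p \<in> (B1 \<union> B2 \<union> B3) - {0}"
      using flat_classify[of "p$1" "p$4" "p$2" "p$6" "p$3" "p$5"] pt6_all[of p]
      by (simp add: flat_iff)
  qed
next
  have "typeB_flat p" if "p \<in> B1 \<union> B2 \<union> B3" for p
    using that unfolding B1_def B2_def B3_def U1_def U2_def U3_def
    by (auto simp: flat_pt6 algebra_simps power2_eq_square)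
  then show "(B1 \<union> B2 \<union> B3) - {0} \<subseteq> B0" unfolding B0_def by auto
qed


definition cnt :: "2 \<Rightarrow> (real^2) list \<Rightarrow> nat" where
  "cnt i xs = length (filter (\<lambda>v. v = axis i 1) xs)"

definition ff :: "nat \<Rightarrow> nat \<Rightarrow> real" where
  "ff k i = (\<Prod>m<i. real k - real m)"

lemma ff_0 [simp]: "ff k 0 = 1" by (simp add: ff_def)

lemma ff_Suc: "ff k (Suc i) = ff k i * real (k - i)"
proof (cases "i \<le> k")
  case True then show ?thesis by (simp add: ff_def of_nat_diff)
next
  case False
  then have "ff k i = 0" unfolding ff_def by (intro prod_zero) (auto intro!: bexI[of _ k])
  then show ?thesis using False by (simp add: ff_def)
qed

lemma basis2: "v \<in> (Basis :: (real^2) set) \<Longrightarrow> v = axis 1 1 \<or> v = axis 2 1"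
proof -
  assume "v \<in> Basis"
  then obtain i where "v = axis i 1" unfolding Basis_vec_def by auto
  then show ?thesis using exhaust_2[of i] by auto
qed

lemma axis12: "axis (1::2) (1::real) \<noteq> axis 2 1"
  by (simp add: axis_eq_axis)

lemma deriv1:
  fixes w :: "'b::real_normed_vector"
  shows "((\<lambda>t. (C * (x1 + t)^m * x2) *\<^sub>R w) has_vector_derivative ((C * (real m * x1^(m-1)) * x2) *\<^sub>R w)) (at 0)"
proof -
  have "((\<lambda>t. C * (x1 + t)^m * x2) has_field_derivative (C * (real m * x1^(m-1)) * x2)) (at 0)"
    by (auto intro!: derivative_eq_intros)
  then show ?thesis
    using has_vector_derivative_scaleR[OF _ has_vector_derivative_const[of w]] by fastforce
qed

lemma smooth_mono:
  fixes w :: "'b::real_normed_vector"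
  shows "smooth_on V (\<lambda>x::real^2. ((x$1)^k * (x$2)^l) *\<^sub>R w)"
  unfolding smooth_on_def
proof (intro exI[of _ "\<lambda>xs x. (ff k (cnt 1 xs) * ff l (cnt 2 xs) * (x$1)^(k - cnt 1 xs) * (x$2)^(l - cnt 2 xs)) *\<^sub>R w"] conjI allI ballI)
  show "(\<lambda>x. (ff k (cnt 1 []) * ff l (cnt 2 []) * x $ 1 ^ (k - cnt 1 []) * x $ 2 ^ (l - cnt 2 [])) *\<^sub>R w) =
    (\<lambda>x. (x $ 1 ^ k * x $ 2 ^ l) *\<^sub>R w)" by (simp add: cnt_def)
next
  fix xs :: "(real^2) list"
  show "continuous_on V (\<lambda>x. (ff k (cnt 1 xs) * ff l (cnt 2 xs) * x $ 1 ^ (k - cnt 1 xs) * x $ 2 ^ (l - cnt 2 xs)) *\<^sub>R w)"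
    by (intro continuous_intros)
next
  fix xs :: "(real^2) list" and v :: "real^2" and x
  assume v: "v \<in> Basis"
  define i1 where "i1 = cnt 1 xs"
  define i2 where "i2 = cnt 2 xs"
  from basis2[OF v] show "((\<lambda>t. (ff k (cnt 1 xs) * ff l (cnt 2 xs) * (x + t *\<^sub>R v) $ 1 ^ (k - cnt 1 xs) * (x + t *\<^sub>R v) $ 2 ^ (l - cnt 2 xs)) *\<^sub>R w) has_vector_derivative
          (ff k (cnt 1 (v # xs)) * ff l (cnt 2 (v # xs)) * x $ 1 ^ (k - cnt 1 (v # xs)) * x $ 2 ^ (l - cnt 2 (v # xs))) *\<^sub>R w) (at 0)"
  proof
    assume v1: "v = axis 1 1"
    have c: "cnt 1 (v # xs) = Suc i1" "cnt 2 (v # xs) = i2"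
      using axis12 by (auto simp: v1 cnt_def i1_def i2_def)
    have "((\<lambda>t. (ff k i1 * (x$1 + t) ^ (k - i1) * (ff l i2 * x $ 2 ^ (l - i2))) *\<^sub>R w) has_vector_derivative
       ((ff k i1 * (real (k - i1) * x$1 ^ (k - i1 - 1)) * (ff l i2 * x $ 2 ^ (l - i2))) *\<^sub>R w)) (at 0)"
      by (rule deriv1)
    then show ?thesis unfolding c
      by (simp add: v1 i1_def[symmetric] i2_def[symmetric] ff_Suc axis_def algebra_simps)
  next
    assume v2: "v = axis 2 1"
    have c: "cnt 1 (v # xs) = i1" "cnt 2 (v # xs) = Suc i2"
      using axis12 by (auto simp: v2 cnt_def i1_def i2_def)
    have "((\<lambda>t. (ff l i2 * (x$2 + t) ^ (l - i2) * (ff k i1 * x $ 1 ^ (k - i1))) *\<^sub>R w) has_vector_derivative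
       ((ff l i2 * (real (l - i2) * x$2 ^ (l - i2 - 1)) * (ff k i1 * x $ 1 ^ (k - i1))) *\<^sub>R w)) (at 0)"
      by (rule deriv1)
    then show ?thesis unfolding c
      by (simp add: v2 i1_def[symmetric] i2_def[symmetric] ff_Suc axis_def algebra_simps)
  qed
qed

lemma smooth_add:
  fixes f g :: "'a::euclidean_space \<Rightarrow> 'b::real_normed_vector"
  assumes "smooth_on V f" "smooth_on V g"
  shows "smooth_on V (\<lambda>x. f x + g x)"
proof -
  obtain Df where f: "Df [] = f" "\<forall>xs. continuous_on V (Df xs)"
    "\<forall>xs. \<forall>v\<in>Basis. \<forall>x\<in>V. ((\<lambda>t. Df xs (x + t *\<^sub>R v)) has_vector_derivative Df (v # xs) x) (at 0)"
    using assms(1) unfolding smooth_on_def by blast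
  obtain Dg where g: "Dg [] = g" "\<forall>xs. continuous_on V (Dg xs)"
    "\<forall>xs. \<forall>v\<in>Basis. \<forall>x\<in>V. ((\<lambda>t. Dg xs (x + t *\<^sub>R v)) has_vector_derivative Dg (v # xs) x) (at 0)"
    using assms(2) unfolding smooth_on_def by blast
  show ?thesis unfolding smooth_on_def
    apply (rule exI[of _ "\<lambda>xs x. Df xs x + Dg xs x"])
  proof (intro conjI allI ballI)
    show "(\<lambda>x. Df [] x + Dg [] x) = (\<lambda>x. f x + g x)" using f(1) g(1) by simp
  next
    fix xs :: "'a list" show "continuous_on V (\<lambda>x. Df xs x + Dg xs x)"
      using f(2) g(2) by (intro continuous_on_add) auto
  next
    fix xs :: "'a list" and v x :: 'a assume "v \<in> Basis" "x \<in> V"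
    then show "((\<lambda>t. Df xs (x + t *\<^sub>R v) + Dg xs (x + t *\<^sub>R v)) has_vector_derivative Df (v # xs) x + Dg (v # xs) x) (at 0)"
      using f(3) g(3) by (intro has_vector_derivative_add) auto
  qed
qed


lemma hd_nth: "((\<lambda>x::real^2. x$i) has_derivative (\<lambda>h. h$i)) (at x)"
  by (rule bounded_linear_imp_has_derivative) (rule bounded_linear_vec_nth)

lemma mono_deriv:
  fixes w :: "real^6"
  shows "((\<lambda>x::real^2. ((x$1)^k * (x$2)^l) *\<^sub>R w) has_derivative
     (\<lambda>h. ((real k * x$1^(k-1) * x$2^l) * h$1 + (real l * x$1^k * x$2^(l-1)) * h$2) *\<^sub>R w)) (at x)"
proof -
  have "((\<lambda>x::real^2. ((x$1)^k * (x$2)^l)) has_derivative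
     (\<lambda>h. ((real k * x$1^(k-1) * x$2^l) * h$1 + (real l * x$1^k * x$2^(l-1)) * h$2))) (at x)"
    apply (rule has_derivative_eq_rhs)
     apply (rule has_derivative_mult[OF has_derivative_power[OF hd_nth] has_derivative_power[OF hd_nth]])
    apply (simp add: fun_eq_iff algebra_simps)
    done
  then show ?thesis
    by (rule has_derivative_scaleR_left)
qed

definition pm :: "(nat \<times> nat \<times> (real^6)) list \<Rightarrow> real^2 \<Rightarrow> real^6" where
  "pm ts x = sum_list (map (\<lambda>(k,l,w). ((x$1)^k * (x$2)^l) *\<^sub>R w) ts)"

definition pmd :: "(nat \<times> nat \<times> (real^6)) list \<Rightarrow> real^2 \<Rightarrow> real^2 \<Rightarrow> real^6" where
  "pmd ts x h = sum_list (map (\<lambda>(k,l,w). ((real k * x$1^(k-1) * x$2^l) * h$1 + (real l * x$1^k * x$2^(l-1)) * h$2) *\<^sub>R w) ts)"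

lemma smooth_pm: "smooth_on V (pm ts)"
proof (induction ts)
  case Nil
  have e: "pm [] = (\<lambda>x::real^2. ((x$1)^0 * (x$2)^0) *\<^sub>R (0::real^6))" by (simp add: pm_def fun_eq_iff)
  show ?case unfolding e by (rule smooth_mono)
next
  case (Cons t ts)
  obtain k l w where t: "t = (k,l,w)" by (cases t) auto
  have e: "pm (t # ts) = (\<lambda>x. ((x$1)^k * (x$2)^l) *\<^sub>R w + pm ts x)" by (simp add: pm_def t fun_eq_iff)
  show ?case unfolding e by (rule smooth_add[OF smooth_mono Cons.IH])
qed

lemma deriv_pm: "(pm ts has_derivative pmd ts x) (at x)"
proof (induction ts)
  case Nil
  show ?case by (simp add: pm_def pmd_def)
next
  case (Cons t ts)
  obtain k l w where t: "t = (k,l,w)" by (cases t) auto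
  have e1: "pm (t # ts) = (\<lambda>x. ((x$1)^k * (x$2)^l) *\<^sub>R w + pm ts x)" by (simp add: pm_def t fun_eq_iff)
  have e2: "pmd (t # ts) x = (\<lambda>h. ((real k * x$1^(k-1) * x$2^l) * h$1 + (real l * x$1^k * x$2^(l-1)) * h$2) *\<^sub>R w + pmd ts x h)"
    by (simp add: pmd_def t fun_eq_iff)
  show ?case unfolding e1 e2 by (rule has_derivative_add[OF mono_deriv Cons.IH])
qed

lemma vec2_eq: "(h::real^2) = h' \<longleftrightarrow> h$1 = h'$1 \<and> h$2 = h'$2"
  by (simp add: vec_eq_iff forall_2)
lemma chart:
  fixes \<phi> :: "real^2 \<Rightarrow> real^6"
  assumes "smooth_on UNIV \<phi>" "immersion_on UNIV \<phi>" "\<And>x. g (\<phi> x) = x" "range \<phi> = S \<inter> U"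
    "open U" "p \<in> U" "continuous_on (S \<inter> U) g"
  shows "\<exists>U (V :: (real^2) set) \<phi>.
      open U \<and> p \<in> U \<and> open V \<and> smooth_on V \<phi> \<and> immersion_on V \<phi> \<and>
      inj_on \<phi> V \<and> \<phi> ` V = S \<inter> U \<and> continuous_on (S \<inter> U) (inv_into V \<phi>)"
proof -
  have inj: "inj_on \<phi> UNIV" 
  proof (rule inj_onI)
    fix x y assume "\<phi> x = \<phi> y"
    then have "g (\<phi> x) = g (\<phi> y)" by simp
    then show "x = y" using assms(3) by simp
  qed
  have "inv_into UNIV \<phi> y = g y" if "y \<in> S \<inter> U" for y
  proof -
    have "y \<in> range \<phi>" using assms(4) that by simp
    then obtain x where x: "y = \<phi> x" by (rule rangeE)
    have "inv_into UNIV \<phi> y = x" unfolding x by (rule inv_into_f_f[OF inj]) simp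
    then show "inv_into UNIV \<phi> y = g y" using assms(3) x by simp
  qed
  then have c: "continuous_on (S \<inter> U) (inv_into UNIV \<phi>)"
    using continuous_on_cong[of "S \<inter> U" "S \<inter> U" "inv_into UNIV \<phi>" g] assms(7) by blast
  have "open U \<and> p \<in> U \<and> open (UNIV :: (real^2) set) \<and> smooth_on UNIV \<phi> \<and> immersion_on UNIV \<phi> \<and>
      inj_on \<phi> UNIV \<and> \<phi> ` UNIV = S \<inter> U \<and> continuous_on (S \<inter> U) (inv_into UNIV \<phi>)"
    using assms(1,2,4,5,6) c inj by simp
  then show ?thesis by blast
qed

lemma pt6_lin: "pt6 a b c d e f = a *\<^sub>R pt6 1 0 0 0 0 0 + b *\<^sub>R pt6 0 1 0 0 0 0 + c *\<^sub>R pt6 0 0 1 0 0 0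
   + d *\<^sub>R pt6 0 0 0 1 0 0 + e *\<^sub>R pt6 0 0 0 0 1 0 + f *\<^sub>R pt6 0 0 0 0 0 1"
  by (simp add: vec_eq_iff forall_6)

lemma vd_pt6:
  assumes "(f1 has_real_derivative f1') (at 0)" "(f2 has_real_derivative f2') (at 0)"
    "(f3 has_real_derivative f3') (at 0)" "(f4 has_real_derivative f4') (at 0)"
    "(f5 has_real_derivative f5') (at 0)" "(f6 has_real_derivative f6') (at 0)"
  shows "((\<lambda>t. pt6 (f1 t) (f2 t) (f3 t) (f4 t) (f5 t) (f6 t)) has_vector_derivative pt6 f1' f2' f3' f4' f5' f6') (at 0)"
proof -
  have h: "\<And>f f' (w::real^6). (f has_real_derivative f') (at 0) \<Longrightarrow> ((\<lambda>t. f t *\<^sub>R w) has_vector_derivative f' *\<^sub>R w) (at 0)"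
    using has_vector_derivative_scaleR[OF _ has_vector_derivative_const] by fastforce
  show ?thesis
    apply (subst (1 2) pt6_lin)
    by (intro has_vector_derivative_add h assms)
qed

lemma tangent_zero:
  assumes "S \<subseteq> {p. p$i = 0}" "w \<in> tangent_space S p"
  shows "w$i = 0"
proof -
  obtain \<gamma> where g: "\<forall>t. \<gamma> t \<in> S" "(\<gamma> has_vector_derivative w) (at 0)"
    using assms(2) unfolding tangent_space_def by blast
  have "((\<lambda>t. \<gamma> t $ i) has_derivative (\<lambda>t. (t *\<^sub>R w) $ i)) (at 0)"
    using bounded_linear.has_derivative[OF bounded_linear_vec_nth g(2)[unfolded has_vector_derivative_def]] .
  then have "((\<lambda>t. \<gamma> t $ i) has_vector_derivative w $ i) (at 0)"
    by (simp add: has_vector_derivative_def mult.commute)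
  moreover have "(\<lambda>t. \<gamma> t $ i) = (\<lambda>t. 0)" using g(1) assms(1) by auto
  ultimately have "((\<lambda>t. 0::real) has_vector_derivative w $ i) (at 0)" by simp
  then show ?thesis using vector_derivative_unique_at[OF _ has_vector_derivative_const] by blast
qed

lemma rng: "F u v \<in> range (\<lambda>(u,v). F u v)"
  by (rule image_eqI[of _ _ "(u,v)"]) auto

lemma tangentI:
  assumes "\<And>t. \<gamma> t \<in> S" "\<gamma> 0 = p" "(\<gamma> has_vector_derivative w) (at 0)"
  shows "w \<in> tangent_space S p"
  using assms unfolding tangent_space_def by blast

lemma inv_cont:
  fixes \<phi> :: "real^2 \<Rightarrow> real^6"
  assumes "\<And>x. g (\<phi> x) = x" "range \<phi> = T" "continuous_on T g"
  shows "inj \<phi>" "continuous_on T (inv_into UNIV \<phi>)"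
proof -
  show inj: "inj \<phi>"
  proof (rule injI)
    fix x y assume "\<phi> x = \<phi> y"
    then have "g (\<phi> x) = g (\<phi> y)" by simp
    then show "x = y" using assms(1) by simp
  qed
  have "inv_into UNIV \<phi> y = g y" if "y \<in> T" for y
  proof -
    have "y \<in> range \<phi>" using assms(2) that by simp
    then obtain x where x: "y = \<phi> x" by (rule rangeE)
    have "inv_into UNIV \<phi> y = x" unfolding x by (rule inv_into_f_f[OF inj]) simp
    then show "inv_into UNIV \<phi> y = g y" using assms(1) x by simp
  qed
  then show "continuous_on T (inv_into UNIV \<phi>)"
    using continuous_on_cong[of T T "inv_into UNIV \<phi>" g] assms(3) by blast
qed

lemma immersion_pm:
  assumes "\<And>x h h'. pmd ts x h = pmd ts x h' \<Longrightarrow> h$1 = h'$1 \<and> h$2 = h'$2"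
  shows "immersion_on UNIV (pm ts)"
  unfolding immersion_on_def
proof
  fix x :: "real^2"
  show "\<exists>L. (pm ts has_derivative L) (at x) \<and> inj L"
  proof (intro exI[of _ "pmd ts x"] conjI)
    show "(pm ts has_derivative pmd ts x) (at x)" by (rule deriv_pm)
    show "inj (pmd ts x)"
    proof (rule injI)
      fix h h' assume "pmd ts x h = pmd ts x h'"
      then have "h$1 = h'$1 \<and> h$2 = h'$2" by (rule assms)
      then show "h = h'" unfolding vec2_eq .
    qed
  qed
qed

lemma range_pair: "range (\<lambda>x::real^2. F (x$1) (x$2)) = range (\<lambda>(u, v). F u v)"
proof
  show "range (\<lambda>x::real^2. F (x$1) (x$2)) \<subseteq> range (\<lambda>(u, v). F u v)"
  proof
    fix y assume "y \<in> range (\<lambda>x::real^2. F (x$1) (x$2))"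
    then obtain x :: "real^2" where "y = F (x$1) (x$2)" by blast
    then show "y \<in> range (\<lambda>(u, v). F u v)" using rng[of F "x$1" "x$2"] by simp
  qed
next
  show "range (\<lambda>(u, v). F u v) \<subseteq> range (\<lambda>x::real^2. F (x$1) (x$2))"
  proof
    fix y assume "y \<in> range (\<lambda>(u, v). F u v)"
    then obtain z where "y = (\<lambda>(u, v). F u v) z" by (rule rangeE)
    then have "y = F (fst z) (snd z)" by (simp add: case_prod_beta)
    then have "y = F ((vector [fst z, snd z] :: real^2)$1) ((vector [fst z, snd z] :: real^2)$2)" by simp
    then show "y \<in> range (\<lambda>x::real^2. F (x$1) (x$2))" by (rule image_eqI) simp
  qed
qed

lemma global_surface:
  fixes \<phi> :: "real^2 \<Rightarrow> real^6"
  assumes "smooth_on UNIV \<phi>" "immersion_on UNIV \<phi>" "\<And>x. g (\<phi> x) = x" "range \<phi> = S"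
    "continuous_on S g"
  shows "smooth_surface S" "diffeomorphic_to_plane S"
proof -
  have i: "inj \<phi>" "continuous_on S (inv_into UNIV \<phi>)" using inv_cont[OF assms(3,4,5)] by auto
  show "diffeomorphic_to_plane S" unfolding diffeomorphic_to_plane_def
    using assms(1,2,4) i by blast
  show "smooth_surface S" unfolding smooth_surface_def
  proof
    fix p assume "p \<in> S"
    show "\<exists>U (V :: (real^2) set) \<phi>.
      open U \<and> p \<in> U \<and> open V \<and> smooth_on V \<phi> \<and> immersion_on V \<phi> \<and>
      inj_on \<phi> V \<and> \<phi> ` V = S \<inter> U \<and> continuous_on (S \<inter> U) (inv_into V \<phi>)"
      by (rule chart[OF assms(1,2,3), of S UNIV]) (use assms(4,5) in auto)
  qed
qed

definition "ts2 = [(1::nat,0::nat,pt6 1 0 0 0 0 0),(0,1,pt6 0 1 0 0 0 0)]"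
definition "ts3 = [(0::nat,0::nat,pt6 0 0 0 1 0 0),(1,0,pt6 1 0 0 1 0 0),(0,1,pt6 0 1 0 0 0 0)]"

lemma pm2: "pm ts2 x = U2 (x$1) (x$2)"
  by (simp add: pm_def ts2_def U2_def vec_eq_iff forall_6)
lemma pm3: "pm ts3 x = U3 (x$1) (x$2)"
  by (simp add: pm_def ts3_def U3_def vec_eq_iff forall_6)

definition g12 :: "real^6 \<Rightarrow> real^2" where "g12 p = p$1 *\<^sub>R axis 1 1 + p$2 *\<^sub>R axis 2 1"

lemma g12_nth [simp]: "g12 p $ 1 = p$1" "g12 p $ 2 = p$2"
  by (simp_all add: g12_def axis_def)

lemma g12_cont: "continuous_on S g12"
  unfolding g12_def by (intro continuous_intros)

lemma B2_props: "closed B2 \<and> smooth_surface B2 \<and> diffeomorphic_to_plane B2"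
proof -
  have r: "range (pm ts2) = B2" unfolding B2_def pm2 by (rule range_pair)
  have B2e: "B2 = {p. p$3 = 0 \<and> p$4 = 0 \<and> p$5 = 0 \<and> p$6 = 0}"
    unfolding B2_def U2_def
    apply (auto simp: image_iff)
    subgoal for x by (rule exI[of _ "x$1"], rule exI[of _ "x$2"]) (simp add: vec_eq_iff forall_6)
    done
  have "closed B2" unfolding B2e
    by (intro closed_Collect_conj closed_Collect_eq continuous_intros)
  moreover have imm: "immersion_on UNIV (pm ts2)"
    by (rule immersion_pm) (simp add: pmd_def ts2_def vec_eq_iff forall_6)
  moreover have gg: "\<And>x. g12 (pm ts2 x) = x" by (simp add: pm2 U2_def vec2_eq)
  ultimately show ?thesis using global_surface[OF smooth_pm imm gg r g12_cont] by simp
qed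

lemma B3_props: "closed B3 \<and> smooth_surface B3 \<and> diffeomorphic_to_plane B3"
proof -
  have r: "range (pm ts3) = B3" unfolding B3_def pm3 by (rule range_pair)
  have B3e: "B3 = {p. p$3 = 0 \<and> p$4 = 1 + p$1 \<and> p$5 = 0 \<and> p$6 = 0}"
    unfolding B3_def U3_def
    apply (auto simp: image_iff)
    subgoal for x by (rule exI[of _ "x$1"], rule exI[of _ "x$2"]) (simp add: vec_eq_iff forall_6)
    done
  have "closed B3" unfolding B3e
    by (intro closed_Collect_conj closed_Collect_eq continuous_intros)
  moreover have imm: "immersion_on UNIV (pm ts3)"
    by (rule immersion_pm) (simp add: pmd_def ts3_def vec_eq_iff forall_6)
  moreover have gg: "\<And>x. g12 (pm ts3 x) = x" by (simp add: pm3 U3_def vec2_eq)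
  ultimately show ?thesis using global_surface[OF smooth_pm imm gg r g12_cont] by simp
qed

lemma B23: "intersect_transversally_along B2 B3 (range (\<lambda>v. pt6 (-1) v 0 0 0 0))"
  unfolding intersect_transversally_along_def
proof
  show "B2 \<inter> B3 = range (\<lambda>v. pt6 (-1) v 0 0 0 0)"
  proof
    show "B2 \<inter> B3 \<subseteq> range (\<lambda>v. pt6 (-1) v 0 0 0 0)"
    proof
      fix p assume "p \<in> B2 \<inter> B3"
      then have "p \<in> B2" "p \<in> B3" by auto
      obtain u v where "p = U2 u v" using \<open>p \<in> B2\<close> unfolding B2_def by auto
      moreover obtain u' v' where "p = U3 u' v'" using \<open>p \<in> B3\<close> unfolding B3_def by auto
      ultimately have "p = pt6 u v 0 0 0 0" "u = u'" "v = v'" "0 = 1 + u'" unfolding U2_def U3_def by (auto simp: pt6_eq)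
      then have "p = pt6 (-1) v 0 0 0 0" by (auto simp: pt6_eq)
      then show "p \<in> range (\<lambda>v. pt6 (-1) v 0 0 0 0)" by blast
    qed
    show "range (\<lambda>v. pt6 (-1) v 0 0 0 0) \<subseteq> B2 \<inter> B3"
    proof
      fix p assume "p \<in> range (\<lambda>v. pt6 (-1) v 0 0 0 0)"
      then obtain v where p: "p = pt6 (-1) v 0 0 0 0" by auto
      have e: "p = U2 (-1) v" "p = U3 (-1) v" unfolding p U2_def U3_def by simp_all
      have "p \<in> B2" unfolding B2_def e(1) by (rule rng)
      moreover have "p \<in> B3" unfolding B3_def e(2) by (rule rng)
      ultimately show "p \<in> B2 \<inter> B3" by simp
    qed
  qed
next
  show "\<forall>p\<in>range (\<lambda>v. pt6 (- 1) v 0 0 0 0). tangent_space B2 p \<noteq> tangent_space B3 p"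
  proof
    fix p assume "p \<in> range (\<lambda>v. pt6 (- 1) v 0 0 0 0)"
    then obtain v where p: "p = pt6 (-1) v 0 0 0 0" by auto
    have t3: "pt6 1 0 0 1 0 0 \<in> tangent_space B3 p"
    proof (rule tangentI[of "\<lambda>t. U3 (-1 + t) v"])
      show "\<And>t. U3 (- 1 + t) v \<in> B3" unfolding B3_def by (rule rng)
      show "U3 (- 1 + 0) v = p" by (simp add: U3_def p)
      show "((\<lambda>t. U3 (- 1 + t) v) has_vector_derivative pt6 1 0 0 1 0 0) (at 0)"
        unfolding U3_def by (intro vd_pt6) (auto intro!: derivative_eq_intros)
    qed
    have n2: "pt6 1 0 0 1 0 0 \<notin> tangent_space B2 p"
    proof
      assume w: "pt6 1 0 0 1 0 0 \<in> tangent_space B2 p"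
      have sub: "B2 \<subseteq> {p. p$4 = 0}" unfolding B2_def U2_def by auto
      have "pt6 1 0 0 1 0 0 $ 4 = (0::real)" by (rule tangent_zero[OF sub w])
      then show False by simp
    qed
    show "tangent_space B2 p \<noteq> tangent_space B3 p"
    proof
      assume "tangent_space B2 p = tangent_space B3 p"
      then show False using t3 n2 by simp
    qed
  qed
qed


definition VB :: "(real^6) set" where
  "VB = {p. p$1 + p$4 = 1 \<and> p$6 = - p$3 \<and> (p$3)^2 = -(p$4*p$5) \<and> p$2*p$5 = -(p$3*p$1) \<and> p$2*p$3 = p$1*p$4}"

definition V2 :: "real \<Rightarrow> real \<Rightarrow> real^6" where
  "V2 t b = pt6 (-(b*t)) b (-(t + b*t^2)) (1 + b*t) (-(t^2 + b*t^3)) (t + b*t^2)"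

definition C3 :: "(real^6) set" where "C3 = range (\<lambda>v. pt6 0 v 0 1 0 0)"

lemma VB_pt6: "pt6 a b c d e f \<in> VB \<longleftrightarrow> a + d = 1 \<and> f = - c \<and> c^2 = -(d*e) \<and> b*e = -(c*a) \<and> b*c = a*d"
  by (simp add: VB_def)

lemma V2_U1: "t \<noteq> 0 \<Longrightarrow> V2 t b = U1 (- (1 + b * t) * t^2) (1 / t)"
  unfolding V2_def U1_def pt6_eq by (simp add: field_simps power2_eq_square power3_eq_cube)

lemma V2_0: "V2 0 b = pt6 0 b 0 1 0 0"
  by (simp add: V2_def)

lemma U1_V2: "s \<noteq> 0 \<Longrightarrow> U1 r s = V2 (1 / s) (- s * (1 + r * s^2))"
  unfolding V2_def U1_def pt6_eq by (simp add: field_simps power2_eq_square power3_eq_cube)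

lemma U1_VB: "U1 r s \<in> VB"
  unfolding U1_def VB_pt6 by (simp add: algebra_simps power2_eq_square)

lemma V2_VB: "V2 t b \<in> VB"
  unfolding V2_def VB_pt6 by (simp add: algebra_simps power2_eq_square power3_eq_cube)


lemma B1_VB: "B1 \<subseteq> VB"
  unfolding B1_def using U1_VB by auto

lemma C3_VB: "C3 \<subseteq> VB"
  unfolding C3_def by (auto simp: VB_pt6)

lemma VB_sub: "VB \<subseteq> B1 \<union> C3"
proof
  fix p assume p: "p \<in> VB"
  define a b c d e f where "a = p$1" "b = p$2" "c = p$3" "d = p$4" "e = p$5" "f = p$6"
  have pp: "p = pt6 a b c d e f" unfolding a_b_c_d_e_f_def by (rule pt6_all)
  have h: "a + d = 1" "f = - c" "c^2 = -(d*e)" "b*e = -(c*a)" "b*c = a*d"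
    using p unfolding pp VB_pt6 by auto
  show "p \<in> B1 \<union> C3"
  proof (cases "e = 0")
    case False
    have "p = U1 e (c/e)"
      unfolding pp U1_def pt6_eq
    proof (intro conjI)
      have d: "d = - (c^2 / e)" using h(3) False by (simp add: field_simps)
      show a: "a = 1 + e * (c / e)^2" using h(1) d False by (simp add: field_simps power2_eq_square)
      show "b = - (c / e) * (1 + e * (c / e)^2)"
        using h(4) False a[symmetric] by (simp add: field_simps)
      show "c = e * (c / e)" using False by simp
      show "d = - e * (c / e)^2" using d False by (simp add: field_simps power2_eq_square)
      show "e = e" ..
      show "f = - e * (c / e)" using h(2) False by simp
    qed
    then show ?thesis unfolding B1_def using rng[of U1] by auto
  next
    case True
    then have c: "c = 0" using h(3) by simp
    then have "a * d = 0" using h(5) by simp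
    then show ?thesis
    proof (cases "a = 0")
      case True
      then have "p = pt6 0 b 0 1 0 0" using pp c h(1,2) \<open>e = 0\<close> by simp
      then show ?thesis unfolding C3_def by auto
    next
      case False
      then have "d = 0" using \<open>a * d = 0\<close> by simp
      then have "p = U1 0 (-b)" using pp c h(1,2) \<open>e = 0\<close> by (simp add: U1_def)
      then show ?thesis unfolding B1_def using rng[of U1] by auto
    qed
  qed
qed

lemma VB_eq: "VB = B1 \<union> C3"
  using VB_sub B1_VB C3_VB by blast

lemma closed_VB: "closed VB"
  unfolding VB_def by (intro closed_Collect_conj closed_Collect_eq continuous_intros)

lemma C3_closure: "C3 \<subseteq> closure B1"
proof
  fix p assume "p \<in> C3"
  then obtain v where p: "p = pt6 0 v 0 1 0 0" unfolding C3_def by auto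
  have lim: "((\<lambda>t. V2 t v) \<longlongrightarrow> V2 0 v) (at 0)"
    unfolding V2_def by (subst (1 2) pt6_lin) (intro tendsto_intros)
  have "\<forall>\<^sub>F t in at 0. V2 t v \<in> closure B1"
  proof -
    have "V2 t v \<in> closure B1" if "t \<noteq> 0" for t
    proof -
      have "V2 t v \<in> B1" unfolding V2_U1[OF that] B1_def by (rule rng)
      then show ?thesis using closure_subset by blast
    qed
    then show ?thesis by (simp add: eventually_at_filter)
  qed
  then have "V2 0 v \<in> closure B1"
    using Lim_in_closed_set[OF closed_closure _ _ lim] by simp
  then show "p \<in> closure B1" by (simp add: p V2_0)
qed


definition "ts1 = [(0::nat,0::nat,pt6 1 0 0 0 0 0),(1,2,pt6 1 0 0 (-1) 0 0),(0,1,pt6 0 (-1) 0 0 0 0),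
   (1,3,pt6 0 (-1) 0 0 0 0),(1,1,pt6 0 0 1 0 0 (-1)),(1,0,pt6 0 0 0 0 1 0)]"
definition "tsV = [(0::nat,0::nat,pt6 0 0 0 1 0 0),(1,1,pt6 (-1) 0 0 1 0 0),(0,1,pt6 0 1 0 0 0 0),
   (1,0,pt6 0 0 (-1) 0 0 1),(2,1,pt6 0 0 (-1) 0 0 1),(2,0,pt6 0 0 0 0 (-1) 0),(3,1,pt6 0 0 0 0 (-1) 0)]"

lemma pm1: "pm ts1 x = U1 (x$1) (x$2)"
  by (simp add: pm_def ts1_def U1_def vec_eq_iff forall_6 algebra_simps power2_eq_square power3_eq_cube)
lemma pmV: "pm tsV x = V2 (x$1) (x$2)"
  by (simp add: pm_def tsV_def V2_def vec_eq_iff forall_6 algebra_simps power2_eq_square power3_eq_cube)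

lemma pmd1:
  "pmd ts1 x h $ 2 = - h$2 - ((x$2)^3 * h$1 + 3 * x$1 * (x$2)^2 * h$2)"
  "pmd ts1 x h $ 3 = x$2 * h$1 + x$1 * h$2"
  "pmd ts1 x h $ 5 = h$1"
  by (simp_all add: pmd_def ts1_def algebra_simps)

lemma pmdV:
  "pmd tsV x h $ 2 = h$2"
  "pmd tsV x h $ 1 = - (x$2 * h$1 + x$1 * h$2)"
  "pmd tsV x h $ 3 = - h$1 - (2 * x$1 * x$2 * h$1 + (x$1)^2 * h$2)"
  by (simp_all add: pmd_def tsV_def algebra_simps)

lemma imm1: "immersion_on UNIV (pm ts1)"
proof (rule immersion_pm)
  fix x h h' assume eq: "pmd ts1 x h = pmd ts1 x h'"
  have c: "pmd ts1 x h $ i = pmd ts1 x h' $ i" for i using eq by simp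
  have e1: "h$1 = h'$1" using c[of 5] unfolding pmd1 .
  have e3: "x$1 * (h$2 - h'$2) = 0" using c[of 3] e1 unfolding pmd1 by algebra
  have e2: "(1 + 3 * x$1 * (x$2)^2) * (h$2 - h'$2) = 0" using c[of 2] e1 unfolding pmd1 by algebra
  have "h$2 = h'$2"
  proof (cases "x$1 = 0")
    case True then show ?thesis using e2 by simp
  next
    case False then show ?thesis using e3 by simp
  qed
  then show "h$1 = h'$1 \<and> h$2 = h'$2" using e1 by simp
qed

lemma immV: "immersion_on UNIV (pm tsV)"
proof (rule immersion_pm)
  fix x h h' assume eq: "pmd tsV x h = pmd tsV x h'"
  have c: "pmd tsV x h $ i = pmd tsV x h' $ i" for i using eq by simp
  have e2: "h$2 = h'$2" using c[of 2] unfolding pmdV .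
  have e1: "x$2 * (h$1 - h'$1) = 0" using c[of 1] e2 unfolding pmdV by algebra
  have e3: "(1 + 2 * x$1 * x$2) * (h$1 - h'$1) = 0" using c[of 3] e2 unfolding pmdV by algebra
  have "h$1 = h'$1"
  proof (cases "x$2 = 0")
    case True then show ?thesis using e3 by simp
  next
    case False then show ?thesis using e1 by simp
  qed
  then show "h$1 = h'$1 \<and> h$2 = h'$2" using e2 by simp
qed

definition g1 :: "real^6 \<Rightarrow> real^2" where
  "g1 p = p$5 *\<^sub>R axis 1 1 + ((p$3*p$5 - p$1*p$2)/((p$1)^2+(p$5)^2)) *\<^sub>R axis 2 1"
definition gV :: "real^6 \<Rightarrow> real^2" where
  "gV p = (-(p$3*p$4 + p$1*p$2)/((p$4)^2+(p$2)^2)) *\<^sub>R axis 1 1 + p$2 *\<^sub>R axis 2 1"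

lemma g1_nth: "g1 p $ 1 = p$5" "g1 p $ 2 = (p$3*p$5 - p$1*p$2)/((p$1)^2+(p$5)^2)"
  by (simp_all add: g1_def axis_def)
lemma gV_nth: "gV p $ 1 = (-(p$3*p$4 + p$1*p$2)/((p$4)^2+(p$2)^2))" "gV p $ 2 = p$2"
  by (simp_all add: gV_def axis_def)

lemma den_nz: "a \<noteq> 0 \<or> e \<noteq> 0 \<Longrightarrow> (a::real)^2 + e^2 \<noteq> 0"
  using sum_power2_eq_zero_iff by blast

lemma gg1: "g1 (pm ts1 x) = x"
proof -
  define r s where "r = x$1" "s = x$2"
  have d: "(1 + r * s^2)^2 + r^2 \<noteq> 0" by (rule den_nz) (cases "r = 0", auto)
  have n: "r * s * r - (1 + r * s^2) * (- s * (1 + r * s^2)) = s * ((1 + r * s^2)^2 + r^2)"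
    by algebra
  have "(r * s * r - (1 + r * s^2) * (- s * (1 + r * s^2))) / ((1 + r * s^2)^2 + r^2) = s"
    unfolding n using d by simp
  then show ?thesis unfolding vec2_eq g1_nth pm1 U1_def pt6_nth r_s_def by simp
qed

lemma ggV: "gV (pm tsV x) = x"
proof -
  define t b where "t = x$1" "b = x$2"
  have d: "(1 + b * t)^2 + b^2 \<noteq> 0" by (rule den_nz) (cases "b = 0", auto)
  have n: "- (- (t + b * t^2) * (1 + b * t) + - (b * t) * b) = t * ((1 + b * t)^2 + b^2)"
    by algebra
  have "- (- (t + b * t^2) * (1 + b * t) + - (b * t) * b) / ((1 + b * t)^2 + b^2) = t"
    unfolding n using d by simp
  then show ?thesis unfolding vec2_eq gV_nth pmV V2_def pt6_nth t_b_def by simp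
qed

definition "O1 = {p::real^6. p$1 \<noteq> 0 \<or> p$5 \<noteq> 0}"
definition "OV = {p::real^6. p$2 \<noteq> 0 \<or> p$4 \<noteq> 0}"

lemma open_O1: "open O1" unfolding O1_def
  by (intro open_Collect_disj open_Collect_neq continuous_intros)
lemma open_OV: "open OV" unfolding OV_def
  by (intro open_Collect_disj open_Collect_neq continuous_intros)

lemma cont_g1: "continuous_on (VB \<inter> O1) g1"
  unfolding g1_def by (intro continuous_intros) (auto simp: O1_def den_nz)
lemma cont_gV: "continuous_on (VB \<inter> OV) gV"
  unfolding gV_def by (intro continuous_intros) (auto simp: OV_def den_nz)

lemma B1_O1: "B1 \<subseteq> O1"
proof
  fix p assume "p \<in> B1"
  then obtain z where "p = (\<lambda>(r,s). U1 r s) z" unfolding B1_def by (rule rangeE)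
  then have p: "p = U1 (fst z) (snd z)" by (simp add: case_prod_beta)
  show "p \<in> O1" unfolding p O1_def U1_def by (cases "fst z = 0") auto
qed

lemma C3_O1: "C3 \<inter> O1 = {}"
  unfolding C3_def O1_def by auto

lemma rng1: "range (pm ts1) = VB \<inter> O1"
proof -
  have "range (pm ts1) = B1" unfolding B1_def pm1 by (rule range_pair)
  also have "B1 = VB \<inter> O1" using VB_eq B1_O1 C3_O1 by blast
  finally show ?thesis .
qed

lemma V2_range: "V2 t b \<in> range (pm tsV)"
proof -
  have "V2 t b = pm tsV (vector [t, b])" unfolding pmV by simp
  then show ?thesis by simp
qed

lemma rngV: "range (pm tsV) = VB \<inter> OV"
proof
  show "range (pm tsV) \<subseteq> VB \<inter> OV"
  proof
    fix p assume "p \<in> range (pm tsV)"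
    then obtain x :: "real^2" where p: "p = V2 (x$1) (x$2)" unfolding pmV by blast
    have "p \<in> VB" unfolding p by (rule V2_VB)
    moreover have "p \<in> OV" unfolding p by (cases "x$2 = 0") (auto simp: OV_def V2_def)
    ultimately show "p \<in> VB \<inter> OV" by simp
  qed
next
  show "VB \<inter> OV \<subseteq> range (pm tsV)"
  proof
    fix p assume p: "p \<in> VB \<inter> OV"
    then have "p \<in> B1 \<or> p \<in> C3" using VB_eq by blast
    then show "p \<in> range (pm tsV)"
    proof
      assume "p \<in> C3"
      then obtain v where "p = pt6 0 v 0 1 0 0" unfolding C3_def by blast
      then have "p = V2 0 v" by (simp add: V2_0)
      then show ?thesis using V2_range by simp
    next
      assume "p \<in> B1"
      then obtain z where "p = (\<lambda>(r,s). U1 r s) z" unfolding B1_def by (rule rangeE)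
      then have pz: "p = U1 (fst z) (snd z)" by (simp add: case_prod_beta)
      have "snd z \<noteq> 0"
      proof
        assume "snd z = 0"
        then have "p = pt6 1 0 0 0 (fst z) 0" unfolding pz U1_def by simp
        then show False using p by (simp add: OV_def)
      qed
      then show ?thesis unfolding pz U1_V2[OF \<open>snd z \<noteq> 0\<close>] using V2_range by simp
    qed
  qed
qed

lemma VB_surface: "smooth_surface VB"
  unfolding smooth_surface_def
proof
  fix p assume p: "p \<in> VB"
  show "\<exists>U (V :: (real^2) set) \<phi>.
      open U \<and> p \<in> U \<and> open V \<and> smooth_on V \<phi> \<and> immersion_on V \<phi> \<and>
      inj_on \<phi> V \<and> \<phi> ` V = VB \<inter> U \<and> continuous_on (VB \<inter> U) (inv_into V \<phi>)"
  proof (cases "p \<in> O1")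
    case True
    show ?thesis by (rule chart[OF smooth_pm imm1 gg1 rng1 open_O1 True cont_g1])
  next
    case False
    then have "p \<in> C3" using p VB_eq B1_O1 by blast
    then have "p \<in> OV" unfolding C3_def OV_def by auto
    show ?thesis by (rule chart[OF smooth_pm immV ggV rngV open_OV \<open>p \<in> OV\<close> cont_gV])
  qed
qed


lemma VB_B2: "intersect_transversally_along VB B2 (range (\<lambda>v. pt6 1 v 0 0 0 0))"
  unfolding intersect_transversally_along_def
proof
  show "VB \<inter> B2 = range (\<lambda>v. pt6 1 v 0 0 0 0)"
  proof
    show "VB \<inter> B2 \<subseteq> range (\<lambda>v. pt6 1 v 0 0 0 0)"
    proof
      fix p assume p: "p \<in> VB \<inter> B2"
      then obtain z where "p = (\<lambda>(u,v). U2 u v) z" unfolding B2_def by blast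
      then have pz: "p = pt6 (fst z) (snd z) 0 0 0 0" by (simp add: case_prod_beta U2_def)
      then have "fst z = 1" using p by (simp add: VB_pt6)
      then have "p = pt6 1 (snd z) 0 0 0 0" using pz by simp
      then show "p \<in> range (\<lambda>v. pt6 1 v 0 0 0 0)" by blast
    qed
    show "range (\<lambda>v. pt6 1 v 0 0 0 0) \<subseteq> VB \<inter> B2"
    proof
      fix p assume "p \<in> range (\<lambda>v. pt6 1 v 0 0 0 0)"
      then obtain v where p: "p = pt6 1 v 0 0 0 0" by blast
      have "p \<in> VB" unfolding p by (simp add: VB_pt6)
      moreover have "p = U2 1 v" unfolding p U2_def by simp
      then have "p \<in> B2" unfolding B2_def by (simp add: rng)
      ultimately show "p \<in> VB \<inter> B2" by simp
    qed
  qed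
next
  show "\<forall>p\<in>range (\<lambda>v. pt6 1 v 0 0 0 0). tangent_space VB p \<noteq> tangent_space B2 p"
  proof
    fix p assume "p \<in> range (\<lambda>v. pt6 1 v 0 0 0 0)"
    then obtain v where p: "p = pt6 1 v 0 0 0 0" by blast
    define w where "w = pt6 (v * v) (v * v * v) (- v) (- (v * v)) 1 v"
    have t1: "w \<in> tangent_space VB p"
    proof (rule tangentI[of "\<lambda>r. U1 r (-v)"])
      show "\<And>t. U1 t (- v) \<in> VB" by (rule U1_VB)
      show "U1 0 (- v) = p" by (simp add: U1_def p)
      show "((\<lambda>r. U1 r (- v)) has_vector_derivative w) (at 0)"
        unfolding U1_def w_def by (intro vd_pt6) (auto intro!: derivative_eq_intros simp: power2_eq_square)
    qed
    have n2: "w \<notin> tangent_space B2 p"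
    proof
      assume w: "w \<in> tangent_space B2 p"
      have sub: "B2 \<subseteq> {p. p$5 = 0}" unfolding B2_def U2_def by auto
      have "w $ 5 = (0::real)" by (rule tangent_zero[OF sub w])
      then show False by (simp add: w_def)
    qed
    show "tangent_space VB p \<noteq> tangent_space B2 p"
    proof
      assume "tangent_space VB p = tangent_space B2 p"
      then show False using t1 n2 by simp
    qed
  qed
qed

lemma VB_B3: "intersect_transversally_along VB B3 (range (\<lambda>v. pt6 0 v 0 1 0 0))"
  unfolding intersect_transversally_along_def
proof
  show "VB \<inter> B3 = range (\<lambda>v. pt6 0 v 0 1 0 0)"
  proof
    show "VB \<inter> B3 \<subseteq> range (\<lambda>v. pt6 0 v 0 1 0 0)"
    proof
      fix p assume p: "p \<in> VB \<inter> B3"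
      then obtain z where "p = (\<lambda>(u,v). U3 u v) z" unfolding B3_def by blast
      then have pz: "p = pt6 (fst z) (snd z) 0 (1 + fst z) 0 0" by (simp add: case_prod_beta U3_def)
      then have "fst z = 0" using p by (simp add: VB_pt6)
      then have "p = pt6 0 (snd z) 0 1 0 0" using pz by simp
      then show "p \<in> range (\<lambda>v. pt6 0 v 0 1 0 0)" by blast
    qed
    show "range (\<lambda>v. pt6 0 v 0 1 0 0) \<subseteq> VB \<inter> B3"
    proof
      fix p assume "p \<in> range (\<lambda>v. pt6 0 v 0 1 0 0)"
      then obtain v where p: "p = pt6 0 v 0 1 0 0" by blast
      have "p \<in> VB" unfolding p by (simp add: VB_pt6)
      moreover have "p = U3 0 v" unfolding p U3_def by simp
      then have "p \<in> B3" unfolding B3_def by (simp add: rng)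
      ultimately show "p \<in> VB \<inter> B3" by simp
    qed
  qed
next
  show "\<forall>p\<in>range (\<lambda>v. pt6 0 v 0 1 0 0). tangent_space VB p \<noteq> tangent_space B3 p"
  proof
    fix p assume "p \<in> range (\<lambda>v. pt6 0 v 0 1 0 0)"
    then obtain v where p: "p = pt6 0 v 0 1 0 0" by blast
    define w where "w = pt6 (-v) 0 (-1) v 0 1"
    have t1: "w \<in> tangent_space VB p"
    proof (rule tangentI[of "\<lambda>t. V2 t v"])
      show "\<And>t. V2 t v \<in> VB" by (rule V2_VB)
      show "V2 0 v = p" by (simp add: V2_0 p)
      show "((\<lambda>t. V2 t v) has_vector_derivative w) (at 0)"
        unfolding V2_def w_def by (intro vd_pt6) (auto intro!: derivative_eq_intros)
    qed
    have n3: "w \<notin> tangent_space B3 p"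
    proof
      assume w: "w \<in> tangent_space B3 p"
      have sub: "B3 \<subseteq> {p. p$3 = 0}" unfolding B3_def U3_def by auto
      have "w $ 3 = (0::real)" by (rule tangent_zero[OF sub w])
      then show False by (simp add: w_def)
    qed
    show "tangent_space VB p \<noteq> tangent_space B3 p"
    proof
      assume "tangent_space VB p = tangent_space B3 p"
      then show False using t1 n3 by simp
    qed
  qed
qed

theorem theorem1p5:
  shows "B0 = (B1 \<union> B2 \<union> B3) - {0}
    \<and> closed B2 \<and> smooth_surface B2 \<and> diffeomorphic_to_plane B2
    \<and> closed B3 \<and> smooth_surface B3 \<and> diffeomorphic_to_plane B3
    \<and> intersect_transversally_along B2 B3 (range (\<lambda>v. pt6 (-1) v 0 0 0 0))
    \<and> (\<exists>B1t. B1 \<subseteq> B1t \<and> B1t \<subseteq> closure B1 \<and> closed B1t \<and> smooth_surface B1t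
         \<and> intersect_transversally_along B1t B2 (range (\<lambda>v. pt6 1 v 0 0 0 0))
         \<and> intersect_transversally_along B1t B3 (range (\<lambda>v. pt6 0 v 0 1 0 0)))"
proof -
  have cl: "VB \<subseteq> closure B1" using VB_eq C3_closure closure_subset by blast
  have ex: "\<exists>B1t. B1 \<subseteq> B1t \<and> B1t \<subseteq> closure B1 \<and> closed B1t \<and> smooth_surface B1t
         \<and> intersect_transversally_along B1t B2 (range (\<lambda>v. pt6 1 v 0 0 0 0))
         \<and> intersect_transversally_along B1t B3 (range (\<lambda>v. pt6 0 v 0 1 0 0))"
    using B1_VB cl closed_VB VB_surface VB_B2 VB_B3 by blast
  show ?thesis using part1 B2_props B3_props B23 ex by blast
qed


end
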